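(* With the setup in the context, for every $X\subseteq E\setminus B$ and every $\mathbf{M}\in A^X$, the set $D_{X,\mathbf{M}}$ is an almost affine code of length $n$ and dimension $n-|X|$ over $A$, whose associated matroid has rank function $r_{D_{X,\mathbf{M}}}(Y)=|Y\setminus(B\cup X)|+r(Y\cap(B\cup X))$ for $Y\subseteq E$. In particular this rank function does not depend on $\mathbf{M}$.
   Context: An almost affine code over a finite alphabet $A$ of length $n$ and dimension $k$ is a subset $C\subseteq A^n$ with $|C|=|A|^k$ such that for every $X\subseteq E=\{1,\dots,n\}$, $\log_{|A|}|C_X|$ is a nonnegative integer ($C_X$ = projection onto coordinates $X$); its associated matroid $M_C$ has rank function $r(X)=\log_{|A|}|C_X|$. Setup: $C$ is an almost affine code of length $n$ and dimension $k$ over $A$ with matroid rank function $r$; $B\subseteq E$ is a basis of $M_C$ (so $|B|=r(B)=k$); $\varphi:A\times A\to A$ is a function such that for every $y\in A$ both $\varphi(y,\cdot)$ and $\varphi(\cdot,y)$ are bijections of $A$. For $\mathbf{m}\in A^{E\setminus B}$, $\Phi_{\mathbf{m}}:A^E\to A^E$ is given by $\Phi_{\mathbf{m}}(\mathbf{w})_i=\mathbf{w}_i$ for $i\in B$ and $\Phi_{\mathbf{m}}(\mathbf{w})_i=\varphi(\mathbf{w}_i,\mathbf{m}_i)$ for $i\in E\setminus B$, and $C_{\mathbf{m}}=\Phi_{\mathbf{m}}(C)$. For $X\subseteq E\setminus B$ and $\mathbf{M}\in A^X$, $D_{X,\mathbf{M}}=\bigcup_{\mathbf{m}\in A^{E\setminus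 B},\ \mathbf{m}_X=\mathbf{M}}C_{\mathbf{m}}$. *)

theory Defs
  imports "HOL-Library.FuncSet"
begin

text \<open>Words of length n over the alphabet A are functions on the coordinate set
  E = {1..n} with values in A (extensional: undefined outside E), i.e. PiE E (\<lambda>_. A).\<close>

definition proj_code :: "(nat \<Rightarrow> 'a) set \<Rightarrow> nat set \<Rightarrow> (nat \<Rightarrow> 'a) set" where
  "proj_code C X = (\<lambda>w. restrict w X) ` C"

text \<open>The alphabet is finite with at least two letters so that log base |A| makes sense.\<close>
definition almost_affine_code :: "'a set \<Rightarrow> nat \<Rightarrow> nat \<Rightarrow> (nat \<Rightarrow> 'a) set \<Rightarrow> bool" where
  "almost_affine_code A n k C \<longleftrightarrow>
     finite A \<and> 2 \<le> card A \<and> C \<subseteq> PiE {1..n} (\<lambda>_. A) \<and> card C = card A ^ k \<and>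
     (\<forall>X \<subseteq> {1..n}. \<exists>j::nat. card (proj_code C X) = card A ^ j)"

text \<open>Rank function of the associated matroid: r(X) = log_|A| |C_X|.\<close>
definition code_rank :: "'a set \<Rightarrow> (nat \<Rightarrow> 'a) set \<Rightarrow> nat set \<Rightarrow> nat" where
  "code_rank A C X = (THE j. card (proj_code C X) = card A ^ j)"

definition Phi :: "nat set \<Rightarrow> nat set \<Rightarrow> ('a \<Rightarrow> 'a \<Rightarrow> 'a) \<Rightarrow> (nat \<Rightarrow> 'a) \<Rightarrow> (nat \<Rightarrow> 'a) \<Rightarrow> (nat \<Rightarrow> 'a)" where
  "Phi E B \<phi> m w = (\<lambda>i. if i \<in> B then w i else if i \<in> E then \<phi> (w i) (m i) else undefined)"

definition code_m :: "nat set \<Rightarrow> nat set \<Rightarrow> ('a \<Rightarrow> 'a \<Rightarrow> 'a) \<Rightarrow> (nat \<Rightarrow> 'a) \<Rightarrow> (nat \<Rightarrow> 'a) set \<Rightarrow> (nat \<Rightarrow> 'a) set" where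
  "code_m E B \<phi> m C = Phi E B \<phi> m ` C"

definition D_code :: "'a set \<Rightarrow> nat set \<Rightarrow> nat set \<Rightarrow> ('a \<Rightarrow> 'a \<Rightarrow> 'a) \<Rightarrow> (nat \<Rightarrow> 'a) set
    \<Rightarrow> nat set \<Rightarrow> (nat \<Rightarrow> 'a) \<Rightarrow> (nat \<Rightarrow> 'a) set" where
  "D_code A E B \<phi> C X M =
     (\<Union>m \<in> {m \<in> PiE (E - B) (\<lambda>_. A). restrict m X = M}. code_m E B \<phi> m C)"

end

theory Submission
  imports Defs
begin

lemma the_pow:
  assumes "2 \<le> (b::nat)" "c = b ^ j"
  shows "(THE j. c = b ^ j) = j"
proof (rule the_equality)
  show "c = b ^ j" by fact
next
  fix i assume "c = b ^ i"
  with assms show "i = j" using power_inject_exp[of b i j] by simp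
qed

lemma card_split:
  assumes fA: "finite A" and fY: "finite Y" and ZY: "Z \<subseteq> Y" and S: "S \<subseteq> PiE Z (\<lambda>_. A)"
  shows "card {e \<in> PiE Y (\<lambda>_. A). restrict e Z \<in> S} = card S * card A ^ card (Y - Z)"
proof -
  let ?T = "{e \<in> PiE Y (\<lambda>_. A). restrict e Z \<in> S}"
  let ?f = "\<lambda>e. (restrict e Z, restrict e (Y - Z))"
  let ?g = "\<lambda>(u, v). (\<lambda>i. if i \<in> Z then u i else v i)"
  have "bij_betw ?f ?T (S \<times> PiE (Y - Z) (\<lambda>_. A))"
  proof (rule bij_betwI[where g = ?g])
    show "?f \<in> ?T \<rightarrow> S \<times> PiE (Y - Z) (\<lambda>_. A)" by auto
    show "?g \<in> S \<times> PiE (Y - Z) (\<lambda>_. A) \<rightarrow> ?T"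
    proof
      fix p assume p: "p \<in> S \<times> PiE (Y - Z) (\<lambda>_. A)"
      then obtain u v where uv: "p = (u, v)" "u \<in> S" "v \<in> PiE (Y - Z) (\<lambda>_. A)" by auto
      have u: "u \<in> PiE Z (\<lambda>_. A)" using uv S by auto
      have "?g p \<in> PiE Y (\<lambda>_. A)" using u uv(3) ZY unfolding uv(1) by (auto simp: PiE_def Pi_def extensional_def)
      moreover have "restrict (?g p) Z = u" using u unfolding uv(1) by (auto simp: PiE_def extensional_def)
      ultimately show "?g p \<in> ?T" using uv by auto
    qed
    show "?g (?f x) = x" if "x \<in> ?T" for x using that ZY by (auto simp: PiE_def extensional_def)
    show "?f (?g y) = y" if yin: "y \<in> S \<times> PiE (Y - Z) (\<lambda>_. A)" for y
    proof -
      obtain u v where uv: "y = (u, v)" "u \<in> S" "v \<in> PiE (Y - Z) (\<lambda>_. A)" using yin by auto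
      have u: "u \<in> PiE Z (\<lambda>_. A)" using uv S by auto
      show ?thesis unfolding uv(1) using u uv(3) by (auto simp: PiE_def extensional_def)
    qed
  qed
  hence "card ?T = card (S \<times> PiE (Y - Z) (\<lambda>_. A))" by (rule bij_betw_same_card)
  also have "\<dots> = card S * card (PiE (Y - Z) (\<lambda>_. A))" by (rule card_cartesian_product)
  also have "card (PiE (Y - Z) (\<lambda>_. A)) = card A ^ card (Y - Z)" using fY by (simp add: card_PiE)
  finally show ?thesis .
qed
theorem mainTheorem8:
  fixes A :: "'a set" and n k :: nat and C :: "(nat \<Rightarrow> 'a) set"
    and B X :: "nat set" and \<phi> :: "'a \<Rightarrow> 'a \<Rightarrow> 'a" and M :: "nat \<Rightarrow> 'a"
  assumes code: "almost_affine_code A n k C"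
    and B_sub: "B \<subseteq> {1..n}" and B_card: "card B = k" and B_rank: "code_rank A C B = k"
    and phi1: "\<And>y. y \<in> A \<Longrightarrow> bij_betw (\<phi> y) A A"
    and phi2: "\<And>y. y \<in> A \<Longrightarrow> bij_betw (\<lambda>x. \<phi> x y) A A"
    and X_sub: "X \<subseteq> {1..n} - B"
    and M_in: "M \<in> PiE X (\<lambda>_. A)"
  shows "almost_affine_code A n (n - card X) (D_code A {1..n} B \<phi> C X M)
     \<and> (\<forall>Y \<subseteq> {1..n}. code_rank A (D_code A {1..n} B \<phi> C X M) Y
            = card (Y - (B \<union> X)) + code_rank A C (Y \<inter> (B \<union> X)))"
proof -
  define E where "E = {1..n}"
  define Z0 where "Z0 = B \<union> X"
  define D where "D = D_code A {1..n} B \<phi> C X M"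
  define G where "G = (\<lambda>w::nat \<Rightarrow> 'a. \<lambda>i. if i \<in> B then w i else if i \<in> X then \<phi> (w i) (M i) else undefined)"
  have fA: "finite A" and A2: "2 \<le> card A" and CE: "C \<subseteq> PiE E (\<lambda>_. A)"
    and cardC: "card C = card A ^ k" and proj: "\<And>Y. Y \<subseteq> E \<Longrightarrow> \<exists>j::nat. card (proj_code C Y) = card A ^ j"
    using code unfolding almost_affine_code_def E_def by auto
  have fE: "finite E" unfolding E_def by simp
  have fC: "finite C" using CE fA fE by (meson finite_PiE finite_subset)
  have Bsub: "B \<subseteq> E" using B_sub E_def by simp
  have Xsub: "X \<subseteq> E" "X \<inter> B = {}" using X_sub E_def by auto
  have Z0E: "Z0 \<subseteq> E" using Bsub Xsub Z0_def by auto
  have phiA: "\<phi> x y \<in> A" if "x \<in> A" "y \<in> A" for x y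
    using phi1[OF that(1)] that(2) by (auto simp: bij_betw_def)
  have MA: "M i \<in> A" if "i \<in> X" for i using M_in that by auto
  obtain a0 where a0: "a0 \<in> A" using A2 by (metis card.empty ex_in_conv not_numeral_le_zero)
  have Dchar: "D = {d \<in> PiE E (\<lambda>_. A). \<exists>w\<in>C. restrict d Z0 = restrict (G w) Z0}"
  proof (intro equalityI subsetI)
    fix d assume "d \<in> D"
    then obtain m w where m: "m \<in> PiE (E - B) (\<lambda>_. A)" "restrict m X = M" and w: "w \<in> C"
      and d: "d = Phi E B \<phi> m w"
      unfolding D_def D_code_def code_m_def E_def by auto
    have wE: "w \<in> PiE E (\<lambda>_. A)" using w CE by auto
    have mX: "m i = M i" if "i \<in> X" for i using m(2) that by (metis restrict_apply')
    have "d \<in> PiE E (\<lambda>_. A)"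
      unfolding d Phi_def using wE m Bsub by (auto simp: PiE_def Pi_def extensional_def intro!: phiA)
    moreover have "restrict d Z0 = restrict (G w) Z0"
      unfolding d Phi_def G_def Z0_def using mX Xsub by (auto simp: restrict_def fun_eq_iff)
    ultimately show "d \<in> {d \<in> PiE E (\<lambda>_. A). \<exists>w\<in>C. restrict d Z0 = restrict (G w) Z0}" using w by auto
  next
    fix d assume "d \<in> {d \<in> PiE E (\<lambda>_. A). \<exists>w\<in>C. restrict d Z0 = restrict (G w) Z0}"
    then obtain w where d: "d \<in> PiE E (\<lambda>_. A)" and w: "w \<in> C" and dw: "restrict d Z0 = restrict (G w) Z0" by auto
    have wE: "w \<in> PiE E (\<lambda>_. A)" using w CE by auto
    have dwi: "d i = G w i" if "i \<in> Z0" for i using dw that by (metis restrict_apply')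
    define m where "m = (\<lambda>i. if i \<in> X then M i else if i \<in> E - B then the_inv_into A (\<phi> (w i)) (d i) else undefined)"
    have m1: "m \<in> PiE (E - B) (\<lambda>_. A)"
    proof -
      have "the_inv_into A (\<phi> (w i)) (d i) \<in> A" if "i \<in> E" for i
      proof -
        have "w i \<in> A" "d i \<in> A" using wE d that by auto
        thus ?thesis using phi1[of "w i"] by (auto intro!: the_inv_into_into simp: bij_betw_def)
      qed
      thus ?thesis unfolding m_def using Xsub MA by (auto simp: PiE_def Pi_def extensional_def)
    qed
    have m2: "restrict m X = M" using M_in unfolding m_def by (auto simp: restrict_def fun_eq_iff PiE_def extensional_def)
    have "Phi E B \<phi> m w = d"
    proof
      fix i
      show "Phi E B \<phi> m w i = d i"
      proof (cases "i \<in> B")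
        case True thus ?thesis using dwi[of i] unfolding Phi_def G_def Z0_def by auto
      next
        case nB: False
        show ?thesis
        proof (cases "i \<in> X")
          case True thus ?thesis using dwi[of i] nB Xsub unfolding Phi_def G_def Z0_def m_def by auto
        next
          case nX: False
          show ?thesis
          proof (cases "i \<in> E")
            case True
            have "\<phi> (w i) (the_inv_into A (\<phi> (w i)) (d i)) = d i"
            proof -
              have "w i \<in> A" "d i \<in> A" using wE d True by auto
              thus ?thesis using phi1[of "w i"] by (auto intro!: f_the_inv_into_f_bij_betw)
            qed
            thus ?thesis using True nB nX unfolding Phi_def m_def by auto
          next
            case False thus ?thesis using nB d unfolding Phi_def by (auto simp: PiE_def extensional_def)
          qed
        qed
      qed
    qed
    thus "d \<in> D" unfolding D_def D_code_def code_m_def E_def using m1 m2 w E_def by blast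
  qed
  define S where "S = (\<lambda>Z. (\<lambda>w. restrict (G w) Z) ` C)"
  have Sin: "S Z \<subseteq> PiE Z (\<lambda>_. A)" if "Z \<subseteq> Z0" for Z
  proof
    fix u assume "u \<in> S Z"
    then obtain w where w: "w \<in> C" "u = restrict (G w) Z" unfolding S_def by auto
    have wE: "w \<in> PiE E (\<lambda>_. A)" using w CE by auto
    have wA: "w i \<in> A" if "i \<in> E" for i using wE that by auto
    show "u \<in> PiE Z (\<lambda>_. A)" unfolding w(2)
    proof (rule PiE_I)
      fix i assume iZ: "i \<in> Z"
      hence "i \<in> B \<or> i \<in> X" "i \<in> E" using that Z0_def Z0E by auto
      thus "restrict (G w) Z i \<in> A" using iZ wA MA unfolding G_def by (auto intro!: phiA)
    qed auto
  qed
  have cardS: "card (S Z) = card (proj_code C Z)" if "Z \<subseteq> Z0" for Z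
  proof -
    define g where "g = (\<lambda>u. restrict (G u) Z)"
    have "S Z = g ` proj_code C Z" unfolding S_def g_def proj_code_def image_image
      by (rule image_cong) (auto simp: G_def restrict_def fun_eq_iff)
    moreover have "inj_on g (proj_code C Z)"
    proof
      fix u v assume u: "u \<in> proj_code C Z" and v: "v \<in> proj_code C Z" and e: "g u = g v"
      have uA: "u \<in> PiE Z (\<lambda>_. A)" and vA: "v \<in> PiE Z (\<lambda>_. A)"
      proof -
        have ZE: "Z \<subseteq> E" using that Z0E by auto
        have CA: "w i \<in> A" if "w \<in> C" "i \<in> E" for w i using CE that by blast
        show "u \<in> PiE Z (\<lambda>_. A)" "v \<in> PiE Z (\<lambda>_. A)"
          using u v ZE CA unfolding proj_code_def by (auto simp: subset_iff)
      qed
      show "u = v"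
      proof
        fix i
        show "u i = v i"
        proof (cases "i \<in> Z")
          case False thus ?thesis using uA vA by (auto simp: PiE_def extensional_def)
        next
          case True
          have ei: "G u i = G v i" using e True unfolding g_def by (metis restrict_apply')
          show ?thesis
          proof (cases "i \<in> B")
            case True thus ?thesis using ei unfolding G_def by simp
          next
            case False
            hence iX: "i \<in> X" using True that Z0_def by auto
            have "\<phi> (u i) (M i) = \<phi> (v i) (M i)" using ei False iX unfolding G_def by simp
            moreover have "u i \<in> A" "v i \<in> A" using uA vA True by auto
            ultimately show ?thesis using phi2[OF MA[OF iX]] by (auto simp: bij_betw_def inj_on_def)
          qed
        qed
      qed
    qed
    ultimately show ?thesis by (simp add: card_image)
  qed
  have projD: "proj_code D Y = {e \<in> PiE Y (\<lambda>_. A). restrict e (Y \<inter> Z0) \<in> S (Y \<inter> Z0)}" if YE: "Y \<subseteq> E" for Y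
  proof (intro equalityI subsetI)
    fix e assume "e \<in> proj_code D Y"
    then obtain d where d: "d \<in> D" "e = restrict d Y" unfolding proj_code_def by auto
    then obtain w where dE: "d \<in> PiE E (\<lambda>_. A)" and w: "w \<in> C" and dw: "restrict d Z0 = restrict (G w) Z0"
      using Dchar by auto
    have "restrict e (Y \<inter> Z0) = restrict (G w) (Y \<inter> Z0)"
    proof
      fix i
      show "restrict e (Y \<inter> Z0) i = restrict (G w) (Y \<inter> Z0) i"
      proof (cases "i \<in> Y \<inter> Z0")
        case True
        have "d i = G w i" using dw True by (metis IntD2 restrict_apply')
        thus ?thesis using True unfolding d(2) by simp
      qed auto
    qed
    hence "restrict e (Y \<inter> Z0) \<in> S (Y \<inter> Z0)" unfolding S_def using w by auto
    moreover have "e \<in> PiE Y (\<lambda>_. A)" using dE YE unfolding d(2) by auto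
    ultimately show "e \<in> {e \<in> PiE Y (\<lambda>_. A). restrict e (Y \<inter> Z0) \<in> S (Y \<inter> Z0)}" by auto
  next
    fix e assume "e \<in> {e \<in> PiE Y (\<lambda>_. A). restrict e (Y \<inter> Z0) \<in> S (Y \<inter> Z0)}"
    then obtain w where e: "e \<in> PiE Y (\<lambda>_. A)" and w: "w \<in> C"
      and ew: "restrict e (Y \<inter> Z0) = restrict (G w) (Y \<inter> Z0)" unfolding S_def by auto
    have wE: "w \<in> PiE E (\<lambda>_. A)" using w CE by auto
    have ewi: "e i = G w i" if "i \<in> Y" "i \<in> Z0" for i using ew that by (metis IntI restrict_apply')
    define d where "d = (\<lambda>i. if i \<in> Y then e i else if i \<in> Z0 then G w i else if i \<in> E then a0 else undefined)"
    have GA: "G w i \<in> A" if "i \<in> Z0" for i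
      using that wE Z0E MA unfolding G_def Z0_def by (auto intro!: phiA)
    have "d \<in> PiE E (\<lambda>_. A)" unfolding d_def using e YE GA Z0E a0
      by (auto simp: PiE_def Pi_def extensional_def)
    moreover have "restrict d Z0 = restrict (G w) Z0" unfolding d_def using ewi by (auto simp: restrict_def fun_eq_iff)
    ultimately have "d \<in> D" using Dchar w by auto
    moreover have "restrict d Y = e" using e unfolding d_def by (auto simp: restrict_def fun_eq_iff PiE_def extensional_def)
    ultimately show "e \<in> proj_code D Y" unfolding proj_code_def by force
  qed
  have cardprojD: "card (proj_code D Y) = card A ^ (card (Y - Z0) + code_rank A C (Y \<inter> Z0))" if YE: "Y \<subseteq> E" for Y
  proof -
    have fY: "finite Y" using YE fE finite_subset by auto
    have "card (proj_code D Y) = card (S (Y \<inter> Z0)) * card A ^ card (Y - (Y \<inter> Z0))"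
      unfolding projD[OF YE] by (rule card_split[OF fA fY _ Sin]) auto
    also have "card (S (Y \<inter> Z0)) = card (proj_code C (Y \<inter> Z0))" by (rule cardS) auto
    also obtain j where j: "card (proj_code C (Y \<inter> Z0)) = card A ^ j" using proj[of "Y \<inter> Z0"] YE by auto
    hence "card (proj_code C (Y \<inter> Z0)) = card A ^ code_rank A C (Y \<inter> Z0)"
      unfolding code_rank_def using the_pow[OF A2 j] j by simp
    also have "Y - (Y \<inter> Z0) = Y - Z0" by auto
    finally show ?thesis by (simp add: power_add mult.commute)
  qed
  have rankD: "code_rank A D Y = card (Y - Z0) + code_rank A C (Y \<inter> Z0)" if YE: "Y \<subseteq> E" for Y
    using the_pow[OF A2 cardprojD[OF YE]] by (simp only: code_rank_def[of A D])
  have DE: "D \<subseteq> PiE E (\<lambda>_. A)" using Dchar by auto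
  have projDE: "proj_code D E = D"
  proof -
    have "proj_code D E = (\<lambda>x. x) ` D" unfolding proj_code_def
      by (rule image_cong) (use DE in auto)
    thus ?thesis by simp
  qed
  have rZ0: "code_rank A C Z0 = k"
  proof -
    have cB: "card (proj_code C B) = card A ^ k"
    proof -
      obtain j where j: "card (proj_code C B) = card A ^ j" using proj[OF Bsub] by auto
      thus ?thesis using B_rank the_pow[OF A2 j] unfolding code_rank_def by simp
    qed
    have le1: "card (proj_code C Z0) \<le> card A ^ k" unfolding proj_code_def cardC[symmetric] by (rule card_image_le[OF fC])
    have "proj_code C B = (\<lambda>u. restrict u B) ` proj_code C Z0" unfolding proj_code_def image_image
      using Z0_def by (intro image_cong) (auto simp: restrict_def fun_eq_iff)
    hence "card (proj_code C B) \<le> card (proj_code C Z0)"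
      using fC unfolding proj_code_def by (metis card_image_le finite_imageI)
    hence "card (proj_code C Z0) = card A ^ k" using cB le1 by simp
    thus ?thesis unfolding code_rank_def by (rule the_pow[OF A2])
  qed
  have cardZ0: "card Z0 = k + card X" unfolding Z0_def using Xsub fE Bsub B_card
    by (subst card_Un_disjoint) (auto intro: finite_subset)
  have cardE: "card E = n" unfolding E_def by simp
  have "card Z0 \<le> n" using Z0E fE cardE card_mono by metis
  have cED: "card (E - Z0) = n - k - card X" using Z0E fE cardZ0 cardE by (simp add: card_Diff_subset finite_subset)
  have "card D = card A ^ (n - card X)"
  proof -
    have "card D = card A ^ (card (E - Z0) + code_rank A C (E \<inter> Z0))" using cardprojD[of E] projDE by simp
    also have "E \<inter> Z0 = Z0" using Z0E by auto
    finally show ?thesis using rZ0 cED \<open>card Z0 \<le> n\<close> cardZ0 by simp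
  qed
  hence "almost_affine_code A n (n - card X) D"
    unfolding almost_affine_code_def using fA A2 DE cardprojD E_def by auto
  moreover have "\<forall>Y \<subseteq> {1..n}. code_rank A D Y = card (Y - (B \<union> X)) + code_rank A C (Y \<inter> (B \<union> X))"
    using rankD unfolding E_def Z0_def by auto
  ultimately show ?thesis unfolding D_def by simp
qed

end
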